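(* Assume $W>L$. For a generic signal $x\in\mathbb{C}^N$ and a generic window $w\in\mathbb{C}^W$, the pair $(x,w)$ is uniquely determined, modulo the scaling ambiguities described below, by a suitably chosen set of $N+W-L$ of the blind STFT measurements $\hat y_{x,w}[k,m]$. That is, there is a set $\Omega$ of $N+W-L$ index pairs $(k,m)$ such that for generic $(x,w)$, whenever $(x',w')\in\mathbb{C}^N\times\mathbb{C}^W$ satisfies $\hat y_{x',w'}[k,m]=\hat y_{x,w}[k,m]$ for all $(k,m)\in\Omega$, there exists $\lambda\in(\mathbb{C}^\times)^L$ with $(x',w')=\lambda\circ(x,w)$.
   Context: Let $N\ge W>L\ge 1$ be integers. Signals $x\in\mathbb{C}^N$ and windows $w\in\mathbb{C}^W$ are extended by zero outside $\{0,\ldots,N-1\}$, resp. $\{0,\ldots,W-1\}$. The blind STFT is $\hat y_{x,w}[k,m]=\sum_{n=0}^{N-1}x[n]w[mL-n]e^{-2\pi i kn/N}$ for integers $k$ and $m=0,\ldots,M-1$, $M=\lceil (N+W-1)/L\rceil$. For $\lambda=(\lambda_0,\ldots,\lambda_{L-1})\in(\mathbb{C}^\times)^L$, the scaling action is $\lambda\circ(x,w)=(x',w')$ with $x'[n]=\lambda_{n\bmod L}x[n]$ and $w'[n]=\lambda^{-1}_{(L-n)\bmod L}w[n]$. "For generic $(x,w)$" means: the set of pairs $(x,w)$ for which the conclusion fails is contained in the zero set of a nonzero polynomial in the real and imaginary parts of the entries of $x$ and $w$. *)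

theory Defs
  imports Complex_Main
begin

text \<open>Signals of length n: functions on the integers, zero outside {0..<n}
  (this realises the zero extension).\<close>
definition is_signal :: "nat \<Rightarrow> (int \<Rightarrow> complex) \<Rightarrow> bool" where
  "is_signal n x \<longleftrightarrow> (\<forall>j. (j < 0 \<or> j \<ge> int n) \<longrightarrow> x j = 0)"

definition num_shifts :: "nat \<Rightarrow> nat \<Rightarrow> nat \<Rightarrow> nat" where
  "num_shifts N W L = nat \<lceil>real (N + W - 1) / real L\<rceil>"

definition blind_stft ::
  "nat \<Rightarrow> nat \<Rightarrow> (int \<Rightarrow> complex) \<Rightarrow> (int \<Rightarrow> complex) \<Rightarrow> int \<Rightarrow> nat \<Rightarrow> complex" where
  "blind_stft N L x w k m =
     (\<Sum>n\<in>{0..<int N}. x n * w (int m * int L - n)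
        * exp (- 2 * pi * \<i> * of_int k * of_int n / of_nat N))"

text \<open>Scaling action of lambda in (C^x)^L (lambda indexed by 0..L-1).\<close>
definition scale_sig :: "nat \<Rightarrow> (int \<Rightarrow> complex) \<Rightarrow> (int \<Rightarrow> complex) \<Rightarrow> (int \<Rightarrow> complex)" where
  "scale_sig L lam x = (\<lambda>n. lam (n mod int L) * x n)"

definition scale_win :: "nat \<Rightarrow> (int \<Rightarrow> complex) \<Rightarrow> (int \<Rightarrow> complex) \<Rightarrow> (int \<Rightarrow> complex)" where
  "scale_win L lam w = (\<lambda>n. inverse (lam ((int L - n) mod int L)) * w n)"

definition realify :: "nat \<Rightarrow> (int \<Rightarrow> complex) \<Rightarrow> (int \<Rightarrow> complex) \<Rightarrow> nat \<Rightarrow> real" where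
  "realify N x w i =
     (if i < 2 * N then
        (if even i then Re (x (int (i div 2))) else Im (x (int (i div 2))))
      else
        (let j = i - 2 * N in
          if even j then Re (w (int (j div 2))) else Im (w (int (j div 2)))))"

text \<open>Multivariate real polynomials in the variables 0..nv-1, given by a
  finitely supported coefficient function on exponent vectors (exponents
  vanish outside 0..nv-1).\<close>
definition is_poly :: "nat \<Rightarrow> ((nat \<Rightarrow> nat) \<Rightarrow> real) \<Rightarrow> bool" where
  "is_poly nv c \<longleftrightarrow> finite {a. c a \<noteq> 0} \<and>
     (\<forall>a. c a \<noteq> 0 \<longrightarrow> (\<forall>i\<ge>nv. a i = 0))"

definition nonzero_poly :: "nat \<Rightarrow> ((nat \<Rightarrow> nat) \<Rightarrow> real) \<Rightarrow> bool" where
  "nonzero_poly nv c \<longleftrightarrow> is_poly nv c \<and> (\<exists>a. c a \<noteq> 0)"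

definition poly_eval :: "nat \<Rightarrow> ((nat \<Rightarrow> nat) \<Rightarrow> real) \<Rightarrow> (nat \<Rightarrow> real) \<Rightarrow> real" where
  "poly_eval nv c z = (\<Sum>a\<in>{a. c a \<noteq> 0}. c a * (\<Prod>i<nv. z i ^ a i))"

end

theory Submission imports Defs "HOL-Analysis.Analysis" "HOL-Computational_Algebra.Polynomial" begin

lemma vander_gen:
  fixes z :: "'a \<Rightarrow> complex" and D :: "'a \<Rightarrow> complex"
  assumes fin: "finite S" and inj: "inj_on z S"
    and eq: "\<And>k. k < card S \<Longrightarrow> (\<Sum>n\<in>S. z n ^ k * D n) = 0"
  shows "\<forall>n\<in>S. D n = 0"
proof
  fix n0 assume n0: "n0 \<in> S"
  define q where "q = (\<Prod>m\<in>S-{n0}. [:- z m, 1:])"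
  have degq: "degree q < card S"
  proof -
    have "degree q \<le> (\<Sum>m\<in>S-{n0}. degree [:- z m, 1:])" unfolding q_def
      using degree_prod_sum_le[of "S-{n0}" "\<lambda>m. [:- z m, 1:]"] fin by (simp add: o_def)
    also have "\<dots> = card (S - {n0})" by simp
    also have "\<dots> < card S" by (rule card_Diff1_less[OF fin n0])
    finally show ?thesis .
  qed
  have "0 = (\<Sum>k\<le>degree q. coeff q k * (\<Sum>n\<in>S. z n ^ k * D n))" using eq degq by simp
  also have "\<dots> = (\<Sum>n\<in>S. (\<Sum>k\<le>degree q. coeff q k * z n ^ k) * D n)"
    by (simp add: sum_distrib_left sum_distrib_right mult_ac sum.swap[of _ S])
  also have "\<dots> = (\<Sum>n\<in>S. D n * poly q (z n))"
    by (simp add: poly_altdef mult_ac)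
  also have "\<dots> = (\<Sum>n\<in>{n0}. D n * poly q (z n))"
  proof (rule sum.mono_neutral_right)
    show "finite S" by fact
    show "{n0} \<subseteq> S" using n0 by simp
    show "\<forall>i\<in>S - {n0}. D i * poly q (z i) = 0"
      unfolding q_def using fin by (auto simp: poly_prod)
  qed
  finally have "D n0 * poly q (z n0) = 0" by simp
  moreover have "poly q (z n0) \<noteq> 0"
    unfolding q_def using fin n0 inj by (auto simp: poly_prod inj_on_def)
  ultimately show "D n0 = 0" by simp
qed

lemma z_inj:
  assumes "N > 0"
  shows "inj_on (\<lambda>n::int. exp (- 2 * pi * \<i> * of_int n / of_nat N)) {0..<int N}"
proof
  fix a b :: int assume a: "a \<in> {0..<int N}" and b: "b \<in> {0..<int N}"
  assume "exp (- 2 * pi * \<i> * of_int a / of_nat N) = exp (- 2 * pi * \<i> * of_int b / of_nat N)"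
  then obtain j :: int where j: "- 2 * pi * \<i> * of_int a / of_nat N = - 2 * pi * \<i> * of_int b / of_nat N + (of_int (2 * j) * pi) * \<i>"
    unfolding exp_eq by blast
  then have "Im (- 2 * pi * \<i> * of_int a / of_nat N) = Im (- 2 * pi * \<i> * of_int b / of_nat N + (of_int (2 * j) * pi) * \<i>)" by simp
  then have "- 2 * pi * a / N = - 2 * pi * b / N + 2 * j * pi" by simp
  then have "- 2 * pi * a = - 2 * pi * b + 2 * j * pi * N" using assms by (simp add: field_simps)
  then have "pi * (b - a) = pi * (j * N)" by (simp add: algebra_simps)
  then have "real_of_int (b - a) = real_of_int (j * N)" by simp
  then have e: "b - a = j * int N" by linarith
  show "a = b"
  proof (rule ccontr)
    assume "a \<noteq> b"
    then have "j \<noteq> 0" using e by auto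
    then have "1 \<le> \<bar>j\<bar>" by linarith
    then have "int N * 1 \<le> int N * \<bar>j\<bar>" by (intro mult_left_mono) auto
    then have "\<bar>j * int N\<bar> \<ge> int N" by (simp add: abs_mult mult.commute)
    then show False using e a b by auto
  qed
qed

lemma exp_pow:
  "exp (- 2 * pi * \<i> * of_int (int k) * of_int n / of_nat N) = exp (- 2 * pi * \<i> * of_int n / of_nat N) ^ k"
proof -
  have "- 2 * pi * \<i> * of_int (int k) * of_int n / of_nat N = of_nat k * (- 2 * pi * \<i> * of_int n / of_nat N)"
    by simp
  then show ?thesis by (simp only: exp_of_nat_mult)
qed

lemma meas_lemma:
  fixes x w x' w' :: "int \<Rightarrow> complex"
  assumes N: "N > 0" and Ssub: "S \<subseteq> {0..<int N}"
    and out: "\<forall>n\<in>{0..<int N} - S. x' n * w' (int m * int L - n) = x n * w (int m * int L - n)"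
    and meas: "\<And>k. k < card S \<Longrightarrow> blind_stft N L x' w' (int k) m = blind_stft N L x w (int k) m"
  shows "\<forall>n\<in>{0..<int N}. x' n * w' (int m * int L - n) = x n * w (int m * int L - n)"
proof -
  define D where "D n = x' n * w' (int m * int L - n) - x n * w (int m * int L - n)" for n
  define z where "z n = exp (- 2 * pi * \<i> * of_int n / of_nat N)" for n :: int
  have finS: "finite S" using Ssub finite_subset by blast
  have "\<forall>n\<in>S. D n = 0"
  proof (rule vander_gen[OF finS])
    show "inj_on z S" unfolding z_def using z_inj[OF N] Ssub by (rule inj_on_subset)
    fix k assume k: "k < card S"
    have "0 = blind_stft N L x' w' (int k) m - blind_stft N L x w (int k) m" using meas[OF k] by simp
    also have "\<dots> = (\<Sum>n\<in>{0..<int N}. z n ^ k * D n)"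
      unfolding blind_stft_def exp_pow D_def z_def
      by (simp add: sum_subtractf[symmetric] exp_pow algebra_simps)
    also have "\<dots> = (\<Sum>n\<in>S. z n ^ k * D n)"
      by (rule sum.mono_neutral_right) (use Ssub out D_def in auto)
    finally show "(\<Sum>n\<in>S. z n ^ k * D n) = 0" by simp
  qed
  then show ?thesis using out D_def by auto
qed

definition Sset :: "nat \<Rightarrow> nat \<Rightarrow> nat \<Rightarrow> nat \<Rightarrow> int set" where
  "Sset N W L m = (if m = 0 then {0} else if m = 1 then {0..int L} else
     {n. 0 \<le> n \<and> n < int L \<and> int m * int L - n < int W} \<union>
     {n. 0 \<le> n \<and> (int m - 1) * int L < n \<and> n \<le> int m * int L \<and> n < int N})"

lemma Sset_sub:
  assumes "L < N" shows "Sset N W L m \<subseteq> {0..<int N}"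
  using assms unfolding Sset_def by auto

lemma sig0: "is_signal n x \<Longrightarrow> (j < 0 \<or> j \<ge> int n) \<Longrightarrow> x j = 0"
  unfolding is_signal_def by blast

lemma core:
  fixes x w x' w' :: "int \<Rightarrow> complex"
  assumes L1: "1 \<le> L" and LW: "L < W" and WN: "W \<le> N"
    and sx: "is_signal N x" and sw: "is_signal W w"
    and sx': "is_signal N x'" and sw': "is_signal W w'"
    and gx: "\<forall>j. 0 \<le> j \<and> j < int L \<longrightarrow> x j \<noteq> 0"
    and gw: "\<forall>j. 0 \<le> j \<and> j \<le> int L \<longrightarrow> w j \<noteq> 0"
    and meas: "\<And>m k. k < card (Sset N W L m) \<Longrightarrow> blind_stft N L x' w' (int k) m = blind_stft N L x w (int k) m"
  shows "\<exists>lam. (\<forall>j. 0 \<le> j \<and> j < int L \<longrightarrow> lam j \<noteq> 0) \<and>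
                x' = scale_sig L lam x \<and> w' = scale_win L lam w"
proof -
  have N0: "N > 0" and LN: "L < N" using L1 LW WN by auto
  have MEASL: "\<And>m. (\<forall>n\<in>{0..<int N} - Sset N W L m. x' n * w' (int m * int L - n) = x n * w (int m * int L - n))
     \<Longrightarrow> \<forall>n\<in>{0..<int N}. x' n * w' (int m * int L - n) = x n * w (int m * int L - n)"
    by (rule meas_lemma[OF N0 Sset_sub[OF LN]]) (auto intro: meas)
  have E0: "x' 0 * w' 0 = x 0 * w 0"
  proof -
    have "\<forall>n\<in>{0..<int N}. x' n * w' (int 0 * int L - n) = x n * w (int 0 * int L - n)"
    proof (rule MEASL, intro ballI)
      fix n assume "n \<in> {0..<int N} - Sset N W L 0"
      then have "- n < 0" by (auto simp: Sset_def)
      then show "x' n * w' (int 0 * int L - n) = x n * w (int 0 * int L - n)"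
        using sig0[OF sw] sig0[OF sw'] by simp
    qed
    then show ?thesis using N0 by (metis atLeastLessThan_iff diff_0 minus_zero mult_zero_left of_nat_0 of_nat_0_less_iff order_refl)
  qed
  have E1: "\<forall>n\<in>{0..<int N}. x' n * w' (int L - n) = x n * w (int L - n)"
  proof -
    have "\<forall>n\<in>{0..<int N}. x' n * w' (int 1 * int L - n) = x n * w (int 1 * int L - n)"
    proof (rule MEASL, intro ballI)
      fix n assume "n \<in> {0..<int N} - Sset N W L 1"
      then have "int L - n < 0" by (auto simp: Sset_def)
      then show "x' n * w' (int 1 * int L - n) = x n * w (int 1 * int L - n)"
        using sig0[OF sw] sig0[OF sw'] by simp
    qed
    then show ?thesis by simp
  qed
  define lam where "lam j = x' j / x j" for j
  have lamnz: "\<And>j. 0 \<le> j \<Longrightarrow> j < int L \<Longrightarrow> lam j \<noteq> 0"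
  proof -
    fix j :: int assume j: "0 \<le> j" "j < int L"
    have "x j * w (int L - j) \<noteq> 0" using gx gw j by auto
    then have "x' j \<noteq> 0" using E1 j LN by force
    then show "lam j \<noteq> 0" using gx j by (simp add: lam_def)
  qed
  have lammod: "\<And>n. lam (n mod int L) \<noteq> 0" using lamnz L1 by simp
  define Inv where "Inv m \<longleftrightarrow> (\<forall>n. 0 \<le> n \<and> n \<le> int m * int L \<longrightarrow> x' n = lam (n mod int L) * x n) \<and>
      (\<forall>j. 0 \<le> j \<and> j \<le> int m * int L \<longrightarrow> w' j = inverse (lam ((int L - j) mod int L)) * w j)" for m
  have x00: "x 0 \<noteq> 0" and w00: "w 0 \<noteq> 0" using gx gw L1 by auto
  have Inv1: "Inv 1"
    unfolding Inv_def
  proof (intro conjI allI impI)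
    fix n :: int assume n: "0 \<le> n \<and> n \<le> int 1 * int L"
    show "x' n = lam (n mod int L) * x n"
    proof (cases "n = int L")
      case True
      have "x' n * w' 0 = x n * w 0" using bspec[OF E1, of "int L"] True LN by simp
      moreover have "w' 0 = x 0 * w 0 / x' 0" using E0 lamnz[of 0] L1 x00 by (auto simp: lam_def field_simps)
      ultimately have "x' n * x 0 * w 0 = x n * w 0 * x' 0" using lamnz[of 0] L1 by (auto simp: lam_def field_simps)
      then have "x' n = x' 0 / x 0 * x n" using x00 w00 by (auto simp: field_simps)
      then show ?thesis using True by (simp add: lam_def)
    next
      case False
      then have "n < int L" using n by simp
      then show ?thesis using n gx by (simp add: lam_def)
    qed
  next
    fix j :: int assume j: "0 \<le> j \<and> j \<le> int 1 * int L"
    show "w' j = inverse (lam ((int L - j) mod int L)) * w j"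
    proof (cases "j = 0")
      case True
      then show ?thesis using E0 lamnz[of 0] L1 x00 by (auto simp: lam_def field_simps)
    next
      case False
      define n where "n = int L - j"
      have n: "0 \<le> n" "n < int L" using j False n_def by auto
      have "x' n * w' j = x n * w j" using bspec[OF E1, of n] n LN unfolding n_def by simp
      moreover have "(int L - j) mod int L = n" unfolding n_def[symmetric] using n by (simp add: mod_pos_pos_trivial)
      moreover have "x' n \<noteq> 0" using lamnz[OF n] by (auto simp: lam_def)
      ultimately show ?thesis using gx n by (auto simp: lam_def field_simps)
    qed
  qed
  have step: "Inv (Suc m)" if m1: "1 \<le> m" and IH: "Inv m" for m
  proof -
    define ml where "ml = int m * int L"
    have t: "int (Suc m) * int L = ml + int L" unfolding ml_def by (simp add: algebra_simps)
    have "int 1 * int L \<le> int m * int L" using m1 by (intro mult_right_mono) auto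
    then have mlL: "int L \<le> ml" unfolding ml_def by simp
    have modml: "\<And>n. (n - ml) mod int L = n mod int L"
    proof -
      fix n
      have "n - ml = n + (- int m) * int L" unfolding ml_def by simp
      then show "(n - ml) mod int L = n mod int L" by (simp only: mod_mult_self1)
    qed
    have IHx: "\<And>n. 0 \<le> n \<Longrightarrow> n \<le> ml \<Longrightarrow> x' n = lam (n mod int L) * x n" using IH unfolding Inv_def ml_def by blast
    have IHw: "\<And>j. 0 \<le> j \<Longrightarrow> j \<le> ml \<Longrightarrow> w' j = inverse (lam ((int L - j) mod int L)) * w j" using IH unfolding Inv_def ml_def by blast
    have Sm: "Sset N W L (Suc m) = {n. 0 \<le> n \<and> n < int L \<and> ml + int L - n < int W} \<union>
     {n. 0 \<le> n \<and> ml < n \<and> n \<le> ml + int L \<and> n < int N}" 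
    proof -
      have a: "int (Suc m) - 1 = int m" by simp
      have b: "Suc m \<noteq> 0" "Suc m \<noteq> 1" using m1 by auto
      show ?thesis unfolding Sset_def if_not_P[OF b(1)] if_not_P[OF b(2)] t a ml_def[symmetric] by (rule refl)
    qed
    have Eall: "\<forall>n\<in>{0..<int N}. x' n * w' (int (Suc m) * int L - n) = x n * w (int (Suc m) * int L - n)"
    proof (rule MEASL, intro ballI)
      fix n assume nS: "n \<in> {0..<int N} - Sset N W L (Suc m)"
      show "x' n * w' (int (Suc m) * int L - n) = x n * w (int (Suc m) * int L - n)"
      proof (cases "ml + int L - n < 0 \<or> ml + int L - n \<ge> int W")
        case True
        then show ?thesis using sig0[OF sw] sig0[OF sw'] t by simp
      next
        case False
        have nN: "0 \<le> n" "n < int N" "n \<notin> Sset N W L (Suc m)" using nS by auto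
        have c1: "ml + int L - n < int W" "n \<le> ml + int L" using False by auto
        have n1a: "int L \<le> n"
        proof (rule ccontr)
          assume "\<not> int L \<le> n"
          then have "n \<in> Sset N W L (Suc m)" unfolding Sm using nN c1 by simp
          then show False using nN by simp
        qed
        have n1b: "n \<le> ml"
        proof (rule ccontr)
          assume "\<not> n \<le> ml"
          then have "n \<in> Sset N W L (Suc m)" unfolding Sm using nN c1 by simp
          then show False using nN by simp
        qed
        note n1 = n1a n1b
        have a: "x' n = lam (n mod int L) * x n" using IHx n1 mlL by simp
        have b: "w' (ml + int L - n) = inverse (lam (n mod int L)) * w (ml + int L - n)"
        proof -
          have "(int L - (ml + int L - n)) = n - ml" by simp
          then have "(int L - (ml + int L - n)) mod int L = n mod int L" using modml by simp
          then show ?thesis using IHw[of "ml + int L - n"] n1 False by simp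
        qed
        show ?thesis unfolding t using a b lammod[of n] by (simp add: field_simps)
      qed
    qed
    show "Inv (Suc m)"
      unfolding Inv_def t
    proof (intro conjI allI impI)
      fix n :: int assume n: "0 \<le> n \<and> n \<le> ml + int L"
      show "x' n = lam (n mod int L) * x n"
      proof (cases "n \<le> ml")
        case True then show ?thesis using IHx n by simp
      next
        case False
        show ?thesis
        proof (cases "n < int N")
          case nN: True
          define j where "j = ml + int L - n"
          have j: "0 \<le> j" "j < int L" "j \<le> ml" using n False mlL j_def by auto
          have e: "x' n * w' j = x n * w j" using Eall n nN t unfolding j_def by auto
          have "(int L - j) mod int L = n mod int L" using modml[of n] j_def by simp
          then have "w' j = inverse (lam (n mod int L)) * w j" using IHw[OF j(1) j(3)] by simp
          moreover have "w j \<noteq> 0" using gw j by simp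
          ultimately have "x' n * (inverse (lam (n mod int L)) * w j) = x n * w j" using e by simp
          then have "x' n * w j = (lam (n mod int L) * x n) * w j" using lammod[of n] by (simp add: field_simps)
          then show ?thesis using \<open>w j \<noteq> 0\<close> by simp
        next
          case nN: False
          then show ?thesis using sig0[OF sx] sig0[OF sx'] by simp
        qed
      qed
    next
      fix j :: int assume j: "0 \<le> j \<and> j \<le> ml + int L"
      show "w' j = inverse (lam ((int L - j) mod int L)) * w j"
      proof (cases "j \<le> ml")
        case True then show ?thesis using IHw j by simp
      next
        case False
        show ?thesis
        proof (cases "j < int W")
          case jW: True
          define n where "n = ml + int L - j"
          have n: "0 \<le> n" "n < int L" "n \<le> ml" using j False mlL n_def by auto
          have "n \<in> {0..<int N}" using n LN by simp
          then have "x' n * w' (int (Suc m) * int L - n) = x n * w (int (Suc m) * int L - n)" using Eall by blast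
          then have e: "x' n * w' j = x n * w j" unfolding t n_def by simp
          have "(int L - j) mod int L = n" using modml[of n] n n_def by simp
          moreover have "x' n = lam n * x n" using IHx[OF n(1) n(3)] n by simp
          moreover have "x n \<noteq> 0" using gx n by simp
          ultimately show ?thesis using e lamnz[OF n(1) n(2)] by (auto simp: field_simps)
        next
          case jW: False
          then show ?thesis using sig0[OF sw] sig0[OF sw'] by simp
        qed
      qed
    qed
  qed
  have InvAll: "\<And>m. 1 \<le> m \<Longrightarrow> Inv m"
  proof -
    fix m :: nat assume "1 \<le> m"
    then show "Inv m"
    proof (induction m rule: nat_induct_at_least)
      case base then show ?case using Inv1 by simp
    next
      case (Suc m) then show ?case using step by simp
    qed
  qed
  have big: "\<And>n. 0 \<le> n \<Longrightarrow> n \<le> int (Suc (nat n)) * int L"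
  proof -
    fix n :: int assume "0 \<le> n"
    then have "n \<le> int (Suc (nat n)) * 1" by simp
    also have "\<dots> \<le> int (Suc (nat n)) * int L" using L1 by (intro mult_left_mono) auto
    finally show "n \<le> int (Suc (nat n)) * int L" .
  qed
  show ?thesis
  proof (intro exI conjI)
    show "\<forall>j. 0 \<le> j \<and> j < int L \<longrightarrow> lam j \<noteq> 0" using lamnz by blast
    show "x' = scale_sig L lam x"
    proof
      fix n
      show "x' n = scale_sig L lam x n"
      proof (cases "n < 0")
        case True then show ?thesis using sig0[OF sx] sig0[OF sx'] by (simp add: scale_sig_def)
      next
        case False
        then show ?thesis using InvAll[of "Suc (nat n)"] big[of n] unfolding Inv_def scale_sig_def by simp
      qed
    qed
    show "w' = scale_win L lam w"
    proof
      fix n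
      show "w' n = scale_win L lam w n"
      proof (cases "n < 0")
        case True then show ?thesis using sig0[OF sw] sig0[OF sw'] by (simp add: scale_win_def)
      next
        case False
        then show ?thesis using InvAll[of "Suc (nat n)"] big[of n] unfolding Inv_def scale_win_def by simp
      qed
    qed
  qed
qed

lemma M_lt:
  assumes L1: "1 \<le> L" and lt: "m * L < N + W - 1"
  shows "m < num_shifts N W L"
proof -
  have "real m * real L < real (N + W - 1)" using lt by (metis of_nat_less_iff of_nat_mult)
  then have "real m < real (N + W - 1) / real L" using L1 by (simp add: field_simps)
  also have "\<dots> \<le> of_int \<lceil>real (N + W - 1) / real L\<rceil>" by (rule le_of_int_ceiling)
  finally have "int m < \<lceil>real (N + W - 1) / real L\<rceil>" by linarith
  then show ?thesis unfolding num_shifts_def by linarith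
qed

lemma Sset_M:
  assumes L1: "1 \<le> L" and LW: "L < W" and WN: "W \<le> N" and ne: "Sset N W L m \<noteq> {}"
  shows "m < num_shifts N W L"
proof (rule M_lt[OF L1])
  show "m * L < N + W - 1"
  proof (cases "m \<le> 1")
    case True
    then have "m * L \<le> L" by (cases m) auto
    then show ?thesis using LW WN by linarith
  next
    case False
    then obtain n where n: "n \<in> Sset N W L m" using ne by blast
    then have "(0 \<le> n \<and> n < int L \<and> int m * int L - n < int W) \<or> ((int m - 1) * int L < n \<and> n < int N)"
      using False unfolding Sset_def by auto
    then have "int m * int L < int N + int W - 1"
    proof
      assume "0 \<le> n \<and> n < int L \<and> int m * int L - n < int W"
      then show ?thesis using LW WN by linarith
    next
      assume "(int m - 1) * int L < n \<and> n < int N"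
      then have "int m * int L - int L < int N" by (simp add: algebra_simps)
      then show ?thesis using LW WN by linarith
    qed
    then have "int (m * L) < int (N + W - 1)" using WN LW by simp
    then show ?thesis by linarith
  qed
qed

lemma H1:
  fixes a b n1 n2 L :: int
  assumes "0 \<le> n1" "n1 < L" "0 \<le> n2" "n2 < L" "a * L - n1 = b * L - n2"
  shows "a = b"
proof (rule ccontr)
  assume ne: "a \<noteq> b"
  have e: "(a - b) * L = n1 - n2" using assms(5) by (simp add: algebra_simps)
  show False
  proof (cases "a < b")
    case True
    then have "(a - b) * L \<le> (-1) * L" using assms by (intro mult_right_mono) auto
    then show ?thesis using e assms by linarith
  next
    case False
    then have "1 * L \<le> (a - b) * L" using ne assms by (intro mult_right_mono) auto
    then show ?thesis using e assms by linarith
  qed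
qed

lemma H2:
  fixes a b n L :: int
  assumes "0 \<le> L" "(a - 1) * L < n" "n \<le> a * L" "(b - 1) * L < n" "n \<le> b * L"
  shows "a = b"
proof (rule ccontr)
  assume ne: "a \<noteq> b"
  show False
  proof (cases "a < b")
    case True
    then have "a * L \<le> (b - 1) * L" using assms by (intro mult_right_mono) auto
    then show ?thesis using assms by linarith
  next
    case False
    then have "b * L \<le> (a - 1) * L" using ne assms by (intro mult_right_mono) auto
    then show ?thesis using assms by linarith
  qed
qed

lemma card_V:
  assumes L1: "1 \<le> L" and LW: "L < W" and WN: "W \<le> N"
  shows "card (SIGMA m:{0..<M}. Sset N W L m) \<le> N + W - L"
proof -
  define V where "V = (SIGMA m:{0..<M}. Sset N W L m)"
  define g where "g = (\<lambda>(m::nat, n::int). if m = 0 then 0 else if m = 1 then n + 1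
       else if n < int L then int m * int L - n + 1 else int W + n - int L)"
  have mem: "\<And>m n. m \<ge> 2 \<Longrightarrow> n \<in> Sset N W L m \<longleftrightarrow>
      (0 \<le> n \<and> n < int L \<and> int m * int L - n < int W) \<or>
      (0 \<le> n \<and> (int m - 1) * int L < n \<and> n \<le> int m * int L \<and> n < int N)"
    unfolding Sset_def by auto
  have lowA: "int m * int L - n \<ge> int L + 1" if "m \<ge> 2" "n < int L" for m n
  proof -
    have "int 2 * int L \<le> int m * int L" using that by (intro mult_right_mono) auto
    then show ?thesis using that by linarith
  qed
  have lowB: "n \<ge> int L + 1" if "m \<ge> 2" "(int m - 1) * int L < n" for m n
  proof -
    have "int 1 * int L \<le> (int m - 1) * int L" using that by (intro mult_right_mono) auto
    then show ?thesis using that by linarith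
  qed
  have range: "g p \<in> {0..<int (N + W - L)}" if p: "p \<in> V" for p
  proof -
    obtain m n where pm: "p = (m, n)" and n: "n \<in> Sset N W L m" using p unfolding V_def by auto
    consider "m = 0" | "m = 1" | "m \<ge> 2" by linarith
    then show ?thesis
    proof cases
      case 1 then show ?thesis using pm LW WN by (simp add: g_def)
    next
      case 2 then have "0 \<le> n" "n \<le> int L" using n by (auto simp: Sset_def)
      then show ?thesis using 2 pm LW WN by (simp add: g_def)
    next
      case 3
      show ?thesis
      proof (cases "n < int L")
        case True
        then have "int m * int L - n < int W" "0 \<le> n" using mem[OF 3] n lowB[OF 3, of n] True by auto
        then show ?thesis using True 3 pm LW WN lowA[OF 3 True] by (simp add: g_def)
      next
        case False
        then have "0 \<le> n" "n < int N" "(int m - 1) * int L < n" using mem[OF 3] n by auto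
        then show ?thesis using False 3 pm LW WN lowB[OF 3] by (simp add: g_def)
      qed
    qed
  qed
  have inj: "inj_on g V"
  proof
    fix p q assume p: "p \<in> V" and q: "q \<in> V" and eq: "g p = g q"
    obtain m1 n1 where pm: "p = (m1, n1)" and n1: "n1 \<in> Sset N W L m1" using p unfolding V_def by auto
    obtain m2 n2 where qm: "q = (m2, n2)" and n2: "n2 \<in> Sset N W L m2" using q unfolding V_def by auto
    have cls: "\<And>m n. n \<in> Sset N W L m \<Longrightarrow>
       (m = 0 \<and> n = 0 \<and> g (m, n) = 0) \<or> (m = 1 \<and> 0 \<le> n \<and> n \<le> int L \<and> g (m, n) = n + 1) \<or>
       (m \<ge> 2 \<and> 0 \<le> n \<and> n < int L \<and> int m * int L - n < int W \<and> int m * int L - n \<ge> int L + 1 \<and> g (m, n) = int m * int L - n + 1) \<or>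
       (m \<ge> 2 \<and> int L + 1 \<le> n \<and> (int m - 1) * int L < n \<and> n \<le> int m * int L \<and> g (m, n) = int W + n - int L)"
    proof -
      fix m n assume n: "n \<in> Sset N W L m"
      consider "m = 0" | "m = 1" | "m \<ge> 2" by linarith
      then show "?thesis m n"
      proof cases
        case 1 then show ?thesis using n by (simp add: g_def Sset_def)
      next
        case 2 then show ?thesis using n by (simp add: g_def Sset_def)
      next
        case 3
        show ?thesis
        proof (cases "n < int L")
          case True
          then have "int m * int L - n < int W" "0 \<le> n" using mem[OF 3] n lowB[OF 3, of n] True by auto
          then show ?thesis using True 3 lowA[OF 3 True] by (simp add: g_def)
        next
          case False
          then have "0 \<le> n" "n \<le> int m * int L" "(int m - 1) * int L < n" using mem[OF 3] n by auto
          then show ?thesis using False 3 lowB[OF 3] by (simp add: g_def)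
        qed
      qed
    qed
    note c1 = cls[OF n1] and c2 = cls[OF n2]
    have H2': "\<And>a b n. (int a - 1) * int L < n \<Longrightarrow> n \<le> int a * int L \<Longrightarrow> (int b - 1) * int L < n \<Longrightarrow> n \<le> int b * int L \<Longrightarrow> a = b"
      using H2[of "int L"] by (metis of_nat_0_le_iff of_nat_eq_iff)
    note eq' = eq[unfolded pm qm]
    show "p = q"
      using c1 c2 eq' LW WN unfolding pm qm
    proof (elim disjE conjE)
    qed (auto dest: H1[of _ "int L" _ "int m1" "int m2"] H2')
  qed
  have "card V \<le> card {0..<int (N + W - L)}"
    by (rule card_inj_on_le[OF inj]) (use range in auto)
  then show ?thesis unfolding V_def by simp
qed

theorem theorem1:
  fixes N W L :: nat
  assumes "1 \<le> L" and "L < W" and "W \<le> N"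
  shows "\<exists>\<Omega> :: (int \<times> nat) set.
           \<Omega> \<subseteq> {0..<int N} \<times> {0..<num_shifts N W L} \<and>
           card \<Omega> = N + W - L \<and>
           (\<exists>c. nonzero_poly (2 * N + 2 * W) c \<and>
              (\<forall>x w. is_signal N x \<and> is_signal W w \<and>
                  poly_eval (2 * N + 2 * W) c (realify N x w) \<noteq> 0 \<longrightarrow>
                (\<forall>x' w'. is_signal N x' \<and> is_signal W w' \<and>
                   (\<forall>(k, m)\<in>\<Omega>. blind_stft N L x' w' k m = blind_stft N L x w k m) \<longrightarrow>
                   (\<exists>lam. (\<forall>j. 0 \<le> j \<and> j < int L \<longrightarrow> lam j \<noteq> 0) \<and>
                          x' = scale_sig L lam x \<and> w' = scale_win L lam w))))"
proof -
  note L1 = assms(1) and LW = assms(2) and WN = assms(3)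
  define M where "M = num_shifts N W L"
  define U where "U = (\<lambda>(m, k). (k, m)) ` (SIGMA m:{0..<M}. {0..<int (card (Sset N W L m))})"
  define B where "B = {0..<int N} \<times> {0..<M}"
  have LN: "L < N" using LW WN by simp
  have finB: "finite B" unfolding B_def by simp
  have UB: "U \<subseteq> B"
  proof
    fix p assume "p \<in> U"
    then obtain m k where p: "p = (k, m)" "m < M" "0 \<le> k" "k < int (card (Sset N W L m))"
      unfolding U_def by auto
    have "card (Sset N W L m) \<le> card {0..<int N}" by (rule card_mono) (use Sset_sub[OF LN] in auto)
    then show "p \<in> B" using p unfolding B_def by auto
  qed
  have cardU: "card U \<le> N + W - L"
  proof -
    have "card U = card (SIGMA m:{0..<M}. {0..<int (card (Sset N W L m))})"
      unfolding U_def by (rule card_image) (auto simp: inj_on_def)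
    also have "\<dots> = (\<Sum>m\<in>{0..<M}. card (Sset N W L m))" by simp
    also have "\<dots> = card (SIGMA m:{0..<M}. Sset N W L m)"
    proof -
      have "\<forall>m\<in>{0..<M}. finite (Sset N W L m)" using Sset_sub[OF LN] finite_subset by blast
      then show ?thesis by simp
    qed
    also have "\<dots> \<le> N + W - L" by (rule card_V[OF L1 LW WN])
    finally show ?thesis .
  qed
  have M2: "1 < M" unfolding M_def using M_lt[OF L1, of 1 N W] LW WN by simp
  have "N + W - L \<le> N * 2" using WN by simp
  also have "\<dots> \<le> N * M" using M2 by simp
  also have "\<dots> = card B" unfolding B_def by (simp add: card_cartesian_product)
  finally have cardB: "N + W - L \<le> card B" .
  have "N + W - L - card U \<le> card (B - U)" using cardB cardU UB finB by (simp add: card_Diff_subset finite_subset)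
  then obtain T where T: "T \<subseteq> B - U" "card T = N + W - L - card U" "finite T"
    by (rule obtain_subset_with_card_n)
  define \<Omega> where "\<Omega> = U \<union> T"
  have finU: "finite U" using UB finB finite_subset by blast
  have cardO: "card \<Omega> = N + W - L"
    unfolding \<Omega>_def using T finU cardU by (subst card_Un_disjoint) auto
  have OB: "\<Omega> \<subseteq> B" using UB T unfolding \<Omega>_def by auto
  define a0 :: "nat \<Rightarrow> nat" where "a0 i = (if even i \<and> (i < 2 * L \<or> (2 * N \<le> i \<and> i \<le> 2 * N + 2 * L)) then 1 else 0)" for i
  define c :: "(nat \<Rightarrow> nat) \<Rightarrow> real" where "c a = (if a = a0 then 1 else 0)" for a
  have cset: "{a. c a \<noteq> 0} = {a0}" unfolding c_def by auto
  have nz: "nonzero_poly (2 * N + 2 * W) c"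
    unfolding nonzero_poly_def is_poly_def cset
  proof (intro conjI)
    show "\<forall>a. c a \<noteq> 0 \<longrightarrow> (\<forall>i\<ge>2 * N + 2 * W. a i = 0)"
      unfolding c_def a0_def using LW by auto
    show "\<exists>a. c a \<noteq> 0" unfolding c_def by auto
  qed simp
  show ?thesis
  proof (rule exI[where x=\<Omega>], intro conjI exI[where x=c] allI impI)
    show "\<Omega> \<subseteq> {0..<int N} \<times> {0..<num_shifts N W L}" using OB unfolding B_def M_def .
    show "card \<Omega> = N + W - L" by (rule cardO)
    show "nonzero_poly (2 * N + 2 * W) c" by (rule nz)
    fix x w x' w' :: "int \<Rightarrow> complex"
    assume h1: "is_signal N x \<and> is_signal W w \<and> poly_eval (2 * N + 2 * W) c (realify N x w) \<noteq> 0"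
    assume h2: "is_signal N x' \<and> is_signal W w' \<and>
                   (\<forall>(k, m)\<in>\<Omega>. blind_stft N L x' w' k m = blind_stft N L x w k m)"
    have pe: "(\<Prod>i<2 * N + 2 * W. realify N x w i ^ a0 i) \<noteq> 0"
      using h1 unfolding poly_eval_def cset by (simp add: c_def)
    have zi: "realify N x w i \<noteq> 0" if "i < 2 * N + 2 * W" "a0 i = 1" for i
      using pe that by (metis (no_types, lifting) finite_lessThan lessThan_iff power_one_right prod_zero_iff)
    have gx: "\<forall>j. 0 \<le> j \<and> j < int L \<longrightarrow> x j \<noteq> 0"
    proof (intro allI impI)
      fix j :: int assume j: "0 \<le> j \<and> j < int L"
      define i where "i = 2 * nat j"
      have jn: "nat j < L" using j by (simp add: nat_less_iff)
      have "realify N x w i \<noteq> 0" using zi[of i] jn LN unfolding i_def a0_def by auto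
      then show "x j \<noteq> 0" using j jn LN unfolding realify_def i_def by auto
    qed
    have gw: "\<forall>j. 0 \<le> j \<and> j \<le> int L \<longrightarrow> w j \<noteq> 0"
    proof (intro allI impI)
      fix j :: int assume j: "0 \<le> j \<and> j \<le> int L"
      define i where "i = 2 * N + 2 * nat j"
      have jn: "nat j \<le> L" using j by (simp add: nat_le_iff)
      have "realify N x w i \<noteq> 0" using zi[of i] jn LW unfolding i_def a0_def by auto
      then show "w j \<noteq> 0" using j jn unfolding realify_def i_def by (auto simp: Let_def)
    qed
    have measU: "blind_stft N L x' w' (int k) m = blind_stft N L x w (int k) m"
      if k: "k < card (Sset N W L m)" for m k
    proof -
      have "Sset N W L m \<noteq> {}" using k by auto
      then have "m < M" unfolding M_def by (rule Sset_M[OF L1 LW WN])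
      then have "(int k, m) \<in> U" unfolding U_def using k by force
      then have "(int k, m) \<in> \<Omega>" unfolding \<Omega>_def by simp
      then show ?thesis using h2 by auto
    qed
    have s1: "is_signal N x" "is_signal W w" using h1 by auto
    have s2: "is_signal N x'" "is_signal W w'" using h2 by auto
    show "\<exists>lam. (\<forall>j. 0 \<le> j \<and> j < int L \<longrightarrow> lam j \<noteq> 0) \<and>
                          x' = scale_sig L lam x \<and> w' = scale_win L lam w"
      by (rule core[OF L1 LW WN s1 s2 gx gw measU])
  qed
qed
end
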